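(* Let $G$ be a simple connected graph with vertices $v_1,\dots,v_n$ and edges $e_1,\dots,e_q$, with reduced incidence matrix $A(G)=[x_{ij}]$. For a set $S=\{t_1<t_2<\dots<t_{n-1}\}\subseteq\{1,\dots,q\}$, the edges $\{e_{t_1},\dots,e_{t_{n-1}}\}$ form a spanning tree of $G$ if and only if there is exactly one nonzero monomial of $A(G)$ with content $S$. Consequently, sending $S$ to the edge set $\{e_t : t\in S\}$ gives a one-to-one correspondence between the contents of uniquely occurring nonzero monomials of $A(G)$ and the (labeled) spanning trees of $G$.
   Context: The reduced incidence matrix $A(G)$ is the $(n-1)\times q$ matrix with $x_{ij}=1$ if $v_i$ is an endpoint of $e_j$ and $x_{ij}=0$ otherwise ($1\le i\le n-1$; the row of $v_n$ is deleted). A nonzero monomial of $A(G)$ is a product $x_{1j_1}x_{2j_2}\cdots x_{(n-1)j_{n-1}}$ with $j_1,\dots,j_{n-1}$ pairwise distinct column indices and every factor equal to $1$; its content (second index set) is $\{j_1,\dots,j_{n-1}\}$. A nonzero monomial is uniquely occurring if no other nonzero monomial has the same content. *)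

theory Defs
  imports Main "HOL-Library.FuncSet"
begin

definition simple_graph :: "nat \<Rightarrow> nat \<Rightarrow> (nat \<Rightarrow> nat set) \<Rightarrow> bool" where
  "simple_graph n q e \<longleftrightarrow>
     (\<forall>j\<in>{1..q}. e j \<subseteq> {1..n} \<and> card (e j) = 2) \<and> inj_on e {1..q}"

definition adj :: "nat set set \<Rightarrow> nat \<Rightarrow> nat \<Rightarrow> bool" where
  "adj T u v \<longleftrightarrow> {u, v} \<in> T \<and> u \<noteq> v"

definition connected_on :: "nat \<Rightarrow> nat set set \<Rightarrow> bool" where
  "connected_on n T \<longleftrightarrow> (\<forall>u\<in>{1..n}. \<forall>v\<in>{1..n}. (adj T)\<^sup>*\<^sup>* u v)"

definition has_cycle :: "nat set set \<Rightarrow> bool" where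
  "has_cycle T \<longleftrightarrow> (\<exists>ws. length ws \<ge> 3 \<and> distinct ws \<and>
       (\<forall>i < length ws. {ws ! i, ws ! ((i + 1) mod length ws)} \<in> T))"

definition spanning_tree :: "nat \<Rightarrow> nat \<Rightarrow> (nat \<Rightarrow> nat set) \<Rightarrow> nat set set \<Rightarrow> bool" where
  "spanning_tree n q e T \<longleftrightarrow> T \<subseteq> e ` {1..q} \<and> connected_on n T \<and> \<not> has_cycle T"

(* entry x_{ij} of the reduced incidence matrix (1 <= i <= n-1, 1 <= j <= q) *)
definition inc_entry :: "(nat \<Rightarrow> nat set) \<Rightarrow> nat \<Rightarrow> nat \<Rightarrow> nat" where
  "inc_entry e i j = (if i \<in> e j then 1 else 0)"

(* a nonzero monomial x_{1 j_1} ... x_{(n-1) j_{n-1}} is represented by the map i \<mapsto> j_i *)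
definition nonzero_monomial :: "nat \<Rightarrow> nat \<Rightarrow> (nat \<Rightarrow> nat set) \<Rightarrow> (nat \<Rightarrow> nat) \<Rightarrow> bool" where
  "nonzero_monomial n q e f \<longleftrightarrow>
     f \<in> {1..n-1} \<rightarrow>\<^sub>E {1..q} \<and> inj_on f {1..n-1} \<and>
     (\<forall>i\<in>{1..n-1}. inc_entry e i (f i) = 1)"

definition content :: "nat \<Rightarrow> (nat \<Rightarrow> nat) \<Rightarrow> nat set" where
  "content n f = f ` {1..n-1}"

definition uniquely_occurring :: "nat \<Rightarrow> nat \<Rightarrow> (nat \<Rightarrow> nat set) \<Rightarrow> (nat \<Rightarrow> nat) \<Rightarrow> bool" where
  "uniquely_occurring n q e f \<longleftrightarrow> nonzero_monomial n q e f \<and>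
     (\<forall>g. nonzero_monomial n q e g \<and> content n g = content n f \<longrightarrow> g = f)"

end

theory Submission
  imports Defs
begin

lemma adj_sym: "adj T u v \<Longrightarrow> adj T v u"
  unfolding adj_def by (auto simp: insert_commute)

lemma rtranclp_adj_sym: "(adj T)\<^sup>*\<^sup>* u v \<Longrightarrow> (adj T)\<^sup>*\<^sup>* v u"
proof (induction rule: rtranclp_induct)
  case base then show ?case by simp
next
  case (step y z)
  then show ?case by (meson adj_sym converse_rtranclp_into_rtranclp)
qed

lemma rtranclp_adj_mono:
  assumes "\<And>x y. adj T x y \<Longrightarrow> (adj T')\<^sup>*\<^sup>* x y"
  shows "(adj T)\<^sup>*\<^sup>* u v \<Longrightarrow> (adj T')\<^sup>*\<^sup>* u v"
proof (induction rule: rtranclp_induct)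
  case base then show ?case by simp
next
  case (step y z)
  then show ?case using assms by (meson rtranclp_trans)
qed

lemma has_cycle_mono: "T \<subseteq> T' \<Longrightarrow> has_cycle T \<Longrightarrow> has_cycle T'"
  unfolding has_cycle_def by blast

lemma rank_exists:
  assumes "\<forall>v\<in>V. (adj T)\<^sup>*\<^sup>* v r"
  shows "\<exists>\<phi> (d::nat \<Rightarrow> nat). \<forall>v\<in>V-{r}. adj T v (\<phi> v) \<and> d (\<phi> v) < d v"
proof -
  define d where "d v = (LEAST k. (adj T ^^ k) v r)" for v
  have "\<forall>v\<in>V-{r}. \<exists>u. adj T v u \<and> d u < d v"
  proof
    fix v assume v: "v \<in> V-{r}"
    then have "\<exists>k. (adj T ^^ k) v r" using assms rtranclp_power by (metis DiffD1)
    then have h: "(adj T ^^ d v) v r" unfolding d_def by (rule LeastI_ex)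
    have "d v \<noteq> 0"
    proof
      assume "d v = 0" with h have "v = r" by simp
      with v show False by simp
    qed
    then obtain m where m: "d v = Suc m" by (cases "d v") auto
    from h m obtain u where u: "adj T v u" "(adj T ^^ m) u r" using relpowp_Suc_D2 by metis
    then have "d u \<le> m" unfolding d_def by (simp add: Least_le)
    then show "\<exists>u. adj T v u \<and> d u < d v" using u m by auto
  qed
  then show ?thesis by metis
qed

lemma cycle_of_map:
  fixes \<psi> :: "nat \<Rightarrow> nat"
  assumes "finite D" "x0 \<in> D" "\<psi> ` D \<subseteq> D"
    and "\<forall>x\<in>D. \<psi> x \<noteq> x" "\<forall>x\<in>D. \<psi> (\<psi> x) \<noteq> x"
  shows "\<exists>ws. length ws \<ge> 3 \<and> distinct ws \<and> set ws \<subseteq> D \<and>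
           (\<forall>i<length ws. \<psi> (ws ! i) = ws ! ((i+1) mod length ws))"
proof -
  define s where "s k = (\<psi> ^^ k) x0" for k
  have sD: "s k \<in> D" for k by (induction k) (use assms in \<open>auto simp: s_def\<close>)
  have sS: "s (Suc k) = \<psi> (s k)" for k by (simp add: s_def)
  have "\<not> inj s"
  proof
    assume "inj s"
    have "range s \<subseteq> D" using sD by auto
    then have "finite (range s)" using assms(1) finite_subset by auto
    then have "finite (UNIV::nat set)" using \<open>inj s\<close> finite_imageD by blast
    then show False by simp
  qed
  then obtain a b where ab: "a \<noteq> b" "s a = s b" unfolding inj_def by blast
  have ex: "\<exists>j. \<exists>i<j. s i = s j"
  proof (cases "a < b")
    case True then show ?thesis using ab by blast
  next
    case False then have "b < a" using ab by simp
    then show ?thesis using ab by metis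
  qed
  define j0 where "j0 = (LEAST j. \<exists>i<j. s i = s j)"
  have "\<exists>i<j0. s i = s j0" unfolding j0_def by (rule LeastI_ex[OF ex])
  then obtain i0 where i0: "i0 < j0" "s i0 = s j0" by blast
  have min: "s a \<noteq> s b" if "a < b" "b < j0" for a b
    using not_less_Least[of b "\<lambda>j. \<exists>i<j. s i = s j"] that unfolding j0_def by blast
  define L where "L = j0 - i0"
  define ws where "ws = map (\<lambda>k. s (i0 + k)) [0..<L]"
  have lenws: "length ws = L" by (simp add: ws_def)
  have nth: "ws ! k = s (i0 + k)" if "k < L" for k using that by (simp add: ws_def)
  have dist: "distinct ws"
    unfolding distinct_conv_nth lenws
  proof (intro allI impI)
    fix a b assume "a < L" "b < L" "a \<noteq> b"
    then show "ws ! a \<noteq> ws ! b"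
    proof (cases "a < b")
      case True then show ?thesis using min[of "i0+a" "i0+b"] nth \<open>a < L\<close> \<open>b < L\<close> L_def by auto
    next
      case False then have "b < a" using \<open>a \<noteq> b\<close> by simp
      have "s (i0+b) \<noteq> s (i0+a)" using min[of "i0+b" "i0+a"] \<open>b < a\<close> \<open>a < L\<close> L_def by auto
      then show ?thesis using nth \<open>a < L\<close> \<open>b < L\<close> by metis
    qed
  qed
  have L3: "L \<ge> 3"
  proof -
    have "L \<noteq> 0" using i0 L_def by simp
    moreover have "L \<noteq> 1"
    proof
      assume "L = 1" then have "j0 = Suc i0" using L_def i0 by simp
      then show False using i0 sS[of i0] assms(4) sD by metis
    qed
    moreover have "L \<noteq> 2"
    proof
      assume "L = 2" then have "j0 = Suc (Suc i0)" using L_def i0 by simp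
      then show False using i0 sS[of i0] sS[of "Suc i0"] assms(5) sD by metis
    qed
    ultimately show ?thesis by linarith
  qed
  have succ: "\<psi> (ws ! i) = ws ! ((i+1) mod L)" if "i < L" for i
  proof (cases "i + 1 < L")
    case True
    then show ?thesis using nth that sS[of "i0+i"] by simp
  next
    case False
    then have "i + 1 = L" using that by simp
    then have "(i+1) mod L = 0" by simp
    moreover have "Suc (i0 + i) = j0" using \<open>i+1 = L\<close> L_def i0 by simp
    then have "\<psi> (ws ! i) = s j0" using nth that sS[of "i0+i"] by simp
    ultimately show ?thesis using nth i0 L3 by simp
  qed
  have "set ws \<subseteq> D" using sD by (auto simp: ws_def)
  then show ?thesis using L3 dist succ lenws by metis
qed

lemma has_cycle_of_ws:
  assumes "length ws \<ge> 3" "distinct ws"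
    and "\<forall>i<length ws. \<psi> (ws ! i) = ws ! ((i+1) mod length ws)"
    and "\<forall>x\<in>set ws. {x, \<psi> x} \<in> T"
  shows "has_cycle T"
  unfolding has_cycle_def
proof (intro exI conjI allI impI)
  fix i assume "i < length ws"
  then show "{ws ! i, ws ! ((i + 1) mod length ws)} \<in> T" using assms(3,4) nth_mem by metis
qed (use assms in auto)


lemma sg_sub: "simple_graph n q e \<Longrightarrow> j \<in> {1..q} \<Longrightarrow> e j \<subseteq> {1..n}"
  unfolding simple_graph_def by blast

lemma sg_card: "simple_graph n q e \<Longrightarrow> j \<in> {1..q} \<Longrightarrow> card (e j) = 2"
  unfolding simple_graph_def by blast

lemma sg_inj: "simple_graph n q e \<Longrightarrow> inj_on e {1..q}"
  unfolding simple_graph_def by blast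

lemma card2_eq: "card A = 2 \<Longrightarrow> a \<in> A \<Longrightarrow> b \<in> A \<Longrightarrow> a \<noteq> b \<Longrightarrow> A = {a, b}"
  by (metis card_2_iff doubleton_eq_iff insertE singletonD)

lemma card2_other: "card A = 2 \<Longrightarrow> a \<in> A \<Longrightarrow> \<exists>u. u \<noteq> a \<and> A = {a, u}"
  by (metis card_2_iff insert_commute insertE singletonD)

lemma nzm_facts:
  assumes "nonzero_monomial n q e f"
  shows "\<And>v. v \<in> {1..n-1} \<Longrightarrow> f v \<in> {1..q}"
    and "inj_on f {1..n-1}"
    and "\<And>v. v \<in> {1..n-1} \<Longrightarrow> v \<in> e (f v)"
    and "f \<in> {1..n-1} \<rightarrow>\<^sub>E {1..q}"
  using assms unfolding nonzero_monomial_def inc_entry_def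
  by (auto split: if_splits)

lemma mono_from_conn:
  assumes sg: "simple_graph n q e" and S: "S \<subseteq> {1..q}"
    and conn: "\<forall>v\<in>{1..n}. (adj (e`S))\<^sup>*\<^sup>* v n"
  shows "\<exists>f. nonzero_monomial n q e f \<and> f ` {1..n-1} \<subseteq> S"
proof -
  obtain \<phi> and d :: "nat \<Rightarrow> nat" where pd: "\<forall>v\<in>{1..n}-{n}. adj (e`S) v (\<phi> v) \<and> d (\<phi> v) < d v"
    using rank_exists[OF conn] by blast
  have "\<forall>v\<in>{1..n-1}. \<exists>j. j\<in>S \<and> e j = {v, \<phi> v}"
  proof
    fix v assume "v \<in> {1..n-1}"
    then have "v \<in> {1..n}-{n}" by auto
    then have "{v, \<phi> v} \<in> e ` S" using pd unfolding adj_def by blast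
    then show "\<exists>j. j\<in>S \<and> e j = {v, \<phi> v}" by auto
  qed
  then obtain g where g: "\<forall>v\<in>{1..n-1}. g v \<in> S \<and> e (g v) = {v, \<phi> v}" by metis
  define f where "f = restrict g {1..n-1}"
  have "f \<in> {1..n-1} \<rightarrow>\<^sub>E {1..q}" unfolding f_def using g S by auto
  moreover have "inj_on f {1..n-1}"
  proof
    fix v w assume v: "v \<in> {1..n-1}" and w: "w \<in> {1..n-1}" and eq: "f v = f w"
    then have "g v = g w" unfolding f_def by simp
    then have "{v, \<phi> v} = {w, \<phi> w}" using g v w by metis
    show "v = w"
    proof (rule ccontr)
      assume "v \<noteq> w"
      then have "v = \<phi> w" "w = \<phi> v" using \<open>{v, \<phi> v} = {w, \<phi> w}\<close> by (auto simp: doubleton_eq_iff)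
      moreover have "v \<in> {1..n}-{n}" "w \<in> {1..n}-{n}" using v w by auto
      ultimately have "d v < d w" "d w < d v" using pd by metis+
      then show False by simp
    qed
  qed
  moreover have "\<forall>i\<in>{1..n-1}. inc_entry e i (f i) = 1"
    using g unfolding f_def inc_entry_def by auto
  moreover have "f ` {1..n-1} \<subseteq> S" using g unfolding f_def by auto
  ultimately show ?thesis unfolding nonzero_monomial_def by blast
qed


lemma mono_unique:
  assumes sg: "simple_graph n q e" and f: "nonzero_monomial n q e f"
    and g: "nonzero_monomial n q e g" and c: "content n f = content n g" and ne: "f \<noteq> g"
  shows "has_cycle (e ` content n f)"
proof -
  note F = nzm_facts[OF f] and G = nzm_facts[OF g]
  obtain v0 where v0: "v0 \<in> {1..n-1}" "f v0 \<noteq> g v0"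
    using ne PiE_ext[OF F(4) G(4)] by blast
  define \<psi> where "\<psi> v = inv_into {1..n-1} g (f v)" for v
  define D where "D = {v\<in>{1..n-1}. f v \<noteq> g v}"
  have P: "\<psi> v \<in> {1..n-1} \<and> g (\<psi> v) = f v \<and> \<psi> v \<noteq> v \<and> e (f v) = {v, \<psi> v}" if "v \<in> D" for v
  proof -
    have v: "v \<in> {1..n-1}" "f v \<noteq> g v" using that D_def by auto
    have "f v \<in> g ` {1..n-1}" using c v unfolding content_def by auto
    then have 1: "\<psi> v \<in> {1..n-1}" "g (\<psi> v) = f v" unfolding \<psi>_def
      by (rule inv_into_into, rule f_inv_into_f)
    have 2: "\<psi> v \<noteq> v" using 1 v by auto
    have "\<psi> v \<in> e (f v)" using G(3)[OF 1(1)] 1 by simp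
    moreover have "v \<in> e (f v)" using F(3) v by simp
    ultimately have "e (f v) = {v, \<psi> v}" using card2_eq sg_card[OF sg F(1)[OF v(1)]] 2 by metis
    then show ?thesis using 1 2 by simp
  qed
  have "\<exists>ws. length ws \<ge> 3 \<and> distinct ws \<and> set ws \<subseteq> D \<and>
           (\<forall>i<length ws. \<psi> (ws ! i) = ws ! ((i+1) mod length ws))"
  proof (rule cycle_of_map)
    show "finite D" unfolding D_def by simp
    show "v0 \<in> D" using v0 D_def by simp
    show "\<psi> ` D \<subseteq> D"
    proof
      fix y assume "y \<in> \<psi> ` D"
      then obtain v where v: "v \<in> D" "y = \<psi> v" by blast
      have "f (\<psi> v) \<noteq> f v"
        using P[OF v(1)] F(2) v(1) unfolding D_def inj_on_def by blast
      then show "y \<in> D" using P[OF v(1)] v unfolding D_def by auto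
    qed
    show "\<forall>x\<in>D. \<psi> x \<noteq> x" using P by blast
    show "\<forall>x\<in>D. \<psi> (\<psi> x) \<noteq> x"
    proof (intro ballI notI)
      fix x assume x: "x \<in> D" and eq: "\<psi> (\<psi> x) = x"
      have xD: "\<psi> x \<in> D"
      proof -
        have "f (\<psi> x) \<noteq> f x"
          using P[OF x] F(2) x unfolding D_def inj_on_def by blast
        then show ?thesis using P[OF x] unfolding D_def by auto
      qed
      have "e (f (\<psi> x)) = e (f x)" using P[OF xD] P[OF x] eq by (auto simp: insert_commute)
      then have "f (\<psi> x) = f x" using sg_inj[OF sg] F(1) P[OF x] x D_def
        by (metis (no_types, lifting) inj_onD mem_Collect_eq)
      then show False using P[OF x] F(2) x unfolding D_def inj_on_def by blast
    qed
  qed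
  then obtain ws where ws: "length ws \<ge> 3" "distinct ws" "set ws \<subseteq> D"
    "\<forall>i<length ws. \<psi> (ws ! i) = ws ! ((i+1) mod length ws)" by blast
  show ?thesis
  proof (rule has_cycle_of_ws[OF ws(1,2,4)])
    show "\<forall>x\<in>set ws. {x, \<psi> x} \<in> e ` content n f"
    proof
      fix x assume "x \<in> set ws"
      then have x: "x \<in> D" using ws(3) by blast
      then have "x \<in> {1..n-1}" unfolding D_def by simp
      then show "{x, \<psi> x} \<in> e ` content n f" using P[OF x] unfolding content_def by force
    qed
  qed
qed

lemma walk_cycle:
  assumes sg: "simple_graph n q e" and f: "nonzero_monomial n q e f"
    and v0: "v0 \<in> {1..n-1}" and nr: "\<not> (adj (e ` content n f))\<^sup>*\<^sup>* v0 n"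
  shows "\<exists>\<psi> ws. length ws \<ge> 3 \<and> distinct ws \<and> set ws \<subseteq> {1..n-1} \<and>
           (\<forall>i<length ws. \<psi> (ws ! i) = ws ! ((i+1) mod length ws)) \<and>
           (\<forall>x\<in>set ws. e (f x) = {x, \<psi> x})"
proof -
  note F = nzm_facts[OF f]
  define T where "T = e ` content n f"
  define \<psi> where "\<psi> v = (SOME u. u \<noteq> v \<and> e (f v) = {v, u})" for v
  have P: "\<psi> v \<noteq> v \<and> e (f v) = {v, \<psi> v}" if "v \<in> {1..n-1}" for v
  proof -
    have "\<exists>u. u \<noteq> v \<and> e (f v) = {v, u}"
      using card2_other[OF sg_card[OF sg F(1)[OF that]] F(3)[OF that]] by blast
    then show ?thesis unfolding \<psi>_def by (rule someI_ex)
  qed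
  define D where "D = {v\<in>{1..n-1}. \<not> (adj T)\<^sup>*\<^sup>* v n}"
  have PD: "\<psi> v \<in> D \<and> adj T v (\<psi> v)" if "v \<in> D" for v
  proof -
    have v: "v \<in> {1..n-1}" "\<not> (adj T)\<^sup>*\<^sup>* v n" using that D_def by auto
    have a: "adj T v (\<psi> v)" unfolding adj_def T_def content_def using P[OF v(1)] v(1) by force
    have "\<psi> v \<in> {1..n}" using P[OF v(1)] sg_sub[OF sg F(1)[OF v(1)]] by auto
    moreover have nr2: "\<not> (adj T)\<^sup>*\<^sup>* (\<psi> v) n"
      using a v(2) converse_rtranclp_into_rtranclp by metis
    moreover have "\<psi> v \<noteq> n" using nr2 by auto
    ultimately show ?thesis using a unfolding D_def by auto
  qed
  have "\<exists>ws. length ws \<ge> 3 \<and> distinct ws \<and> set ws \<subseteq> D \<and>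
           (\<forall>i<length ws. \<psi> (ws ! i) = ws ! ((i+1) mod length ws))"
  proof (rule cycle_of_map)
    show "finite D" unfolding D_def by simp
    show "v0 \<in> D" using v0 nr D_def T_def by simp
    show "\<psi> ` D \<subseteq> D" using PD by blast
    show "\<forall>x\<in>D. \<psi> x \<noteq> x" using P D_def by blast
    show "\<forall>x\<in>D. \<psi> (\<psi> x) \<noteq> x"
    proof (intro ballI notI)
      fix x assume x: "x \<in> D" and eq: "\<psi> (\<psi> x) = x"
      have x1: "x \<in> {1..n-1}" using x D_def by simp
      have x2: "\<psi> x \<in> {1..n-1}" using PD[OF x] D_def by simp
      have "e (f (\<psi> x)) = e (f x)" using P[OF x1] P[OF x2] eq by (auto simp: insert_commute)
      then have "f (\<psi> x) = f x" using sg_inj[OF sg] F(1) x1 x2 by (meson inj_onD)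
      then have "\<psi> x = x" using F(2) x1 x2 by (meson inj_onD)
      then show False using P[OF x1] by simp
    qed
  qed
  then obtain ws where ws: "length ws \<ge> 3" "distinct ws" "set ws \<subseteq> D"
    "\<forall>i<length ws. \<psi> (ws ! i) = ws ! ((i+1) mod length ws)" by blast
  have "set ws \<subseteq> {1..n-1}" using ws(3) D_def by auto
  moreover have "\<forall>x\<in>set ws. e (f x) = {x, \<psi> x}" using P calculation by blast
  ultimately show ?thesis using ws by blast
qed

lemma flip_mono:
  assumes sg: "simple_graph n q e" and f: "nonzero_monomial n q e f"
    and ws: "length ws \<ge> 3" "set ws \<subseteq> {1..n-1}"
      "\<forall>i<length ws. \<psi> (ws ! i) = ws ! ((i+1) mod length ws)"
      "\<forall>x\<in>set ws. e (f x) = {x, \<psi> x}"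
  shows "\<exists>g. nonzero_monomial n q e g \<and> content n g = content n f \<and> g \<noteq> f"
proof -
  note F = nzm_facts[OF f]
  define W where "W = set ws"
  define L where "L = length ws"
  have pre_ex: "\<exists>p. p \<in> W \<and> \<psi> p = v" if "v \<in> W" for v
  proof -
    have "v \<in> set ws" using that by (simp add: W_def)
    then have "\<exists>i<L. ws ! i = v" unfolding L_def by (simp add: in_set_conv_nth)
    then obtain i where i: "i < L" "v = ws ! i" by metis
    show ?thesis
    proof (cases i)
      case 0
      have L1: "L - 1 < L" using ws(1) L_def by simp
      have "\<psi> (ws ! (L-1)) = ws ! ((L - 1 + 1) mod L)" using ws(3) L1 unfolding L_def by simp
      also have "L - 1 + 1 = L" using ws(1) L_def by simp
      then have "(L - 1 + 1) mod L = 0" by simp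
      finally have "\<psi> (ws ! (L-1)) = v" using i 0 by simp
      moreover have "ws ! (L-1) \<in> W" using L1 L_def W_def by simp
      ultimately show ?thesis by blast
    next
      case (Suc k)
      have k: "k < L" using i Suc by simp
      have "\<psi> (ws ! k) = ws ! ((k + 1) mod L)" using ws(3) k unfolding L_def by simp
      also have "(k + 1) mod L = i" using i Suc by simp
      finally have "\<psi> (ws ! k) = v" using i by simp
      moreover have "ws ! k \<in> W" using k L_def W_def by simp
      ultimately show ?thesis by blast
    qed
  qed
  define pre where "pre v = (SOME p. p \<in> W \<and> \<psi> p = v)" for v
  have pre: "pre v \<in> W \<and> \<psi> (pre v) = v" if "v \<in> W" for v
    using pre_ex[OF that] unfolding pre_def by (rule someI_ex)
  have W1: "W \<subseteq> {1..n-1}" using ws(2) W_def by simp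
  have psi_ne: "\<psi> x \<noteq> x" if "x \<in> W" for x
  proof
    assume "\<psi> x = x"
    then have "e (f x) = {x}" using ws(4) that W_def by simp
    moreover have "card (e (f x)) = 2" using sg_card[OF sg F(1)] that W1 by blast
    ultimately show False by simp
  qed
  define g where "g = restrict (\<lambda>v. if v \<in> W then f (pre v) else f v) {1..n-1}"
  have gW: "g v = f (pre v)" if "v \<in> W" for v using that W1 g_def by auto
  have gnW: "g v = f v" if "v \<in> {1..n-1}" "v \<notin> W" for v using that g_def by auto
  have "(\<lambda>v. if v \<in> W then f (pre v) else f v) \<in> {1..n-1} \<rightarrow> {1..q}"
  proof
    fix v assume v: "v \<in> {1..n-1}"
    show "(if v \<in> W then f (pre v) else f v) \<in> {1..q}"
    proof (cases "v \<in> W")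
      case True
      then have "pre v \<in> {1..n-1}" using pre W1 by blast
      then show ?thesis using True F(1) by simp
    next
      case False then show ?thesis using v F(1) by simp
    qed
  qed
  then have gPi: "g \<in> {1..n-1} \<rightarrow>\<^sub>E {1..q}"
    unfolding g_def by (rule iffD2[OF restrict_PiE])
  have ginj: "inj_on g {1..n-1}"
  proof
    fix v w assume v: "v \<in> {1..n-1}" and w: "w \<in> {1..n-1}" and eq: "g v = g w"
    show "v = w"
    proof (cases "v \<in> W"; cases "w \<in> W")
      assume "v \<in> W" "w \<in> W"
      then have "f (pre v) = f (pre w)" using eq gW by simp
      then have "pre v = pre w" using F(2) pre \<open>v \<in> W\<close> \<open>w \<in> W\<close> W1 by (meson inj_onD subsetD)
      then show ?thesis using pre \<open>v \<in> W\<close> \<open>w \<in> W\<close> by metis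
    next
      assume "v \<in> W" "w \<notin> W"
      then have "f (pre v) = f w" using eq gW gnW w by simp
      then have "pre v = w" using F(2) pre \<open>v \<in> W\<close> W1 w by (meson inj_onD subsetD)
      then show ?thesis using pre \<open>v \<in> W\<close> \<open>w \<notin> W\<close> by metis
    next
      assume "v \<notin> W" "w \<in> W"
      then have "f v = f (pre w)" using eq gW gnW v by simp
      then have "v = pre w" using F(2) pre \<open>w \<in> W\<close> W1 v by (meson inj_onD subsetD)
      then show ?thesis using pre \<open>w \<in> W\<close> \<open>v \<notin> W\<close> by metis
    next
      assume "v \<notin> W" "w \<notin> W"
      then show ?thesis using eq gnW v w F(2) by (metis inj_onD)
    qed
  qed
  have ginc: "\<forall>i\<in>{1..n-1}. inc_entry e i (g i) = 1"
  proof
    fix v assume v: "v \<in> {1..n-1}"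
    show "inc_entry e v (g v) = 1"
    proof (cases "v \<in> W")
      case True
      have pv: "pre v \<in> W" "\<psi> (pre v) = v" using pre True by auto
      have "e (g v) = e (f (pre v))" using gW True by simp
      also have "\<dots> = {pre v, \<psi> (pre v)}" using ws(4) pv W_def by blast
      finally have "e (g v) = {pre v, v}" using pv by simp
      then show ?thesis unfolding inc_entry_def by simp
    next
      case False
      then show ?thesis using gnW v F(3) unfolding inc_entry_def by simp
    qed
  qed
  have gnz: "nonzero_monomial n q e g" unfolding nonzero_monomial_def using gPi ginj ginc by blast
  have sub: "g ` {1..n-1} \<subseteq> f ` {1..n-1}"
  proof
    fix y assume "y \<in> g ` {1..n-1}"
    then obtain v where v: "v \<in> {1..n-1}" "y = g v" by blast
    show "y \<in> f ` {1..n-1}"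
    proof (cases "v \<in> W")
      case True then show ?thesis using v gW pre W1 by blast
    next
      case False then show ?thesis using v gnW by simp
    qed
  qed
  have "card (g ` {1..n-1}) = card (f ` {1..n-1})"
    using card_image[OF ginj] card_image[OF F(2)] by simp
  then have "g ` {1..n-1} = f ` {1..n-1}" using sub by (simp add: card_subset_eq)
  then have cg: "content n g = content n f" unfolding content_def by simp
  have "0 < length ws" using ws(1) by linarith
  then have "ws ! 0 \<in> W" unfolding W_def by (rule nth_mem)
  then have "g (ws ! 0) \<noteq> f (ws ! 0)"
    using gW pre psi_ne F(2) W1 by (metis inj_onD subsetD)
  then have "g \<noteq> f" by metis
  then show ?thesis using gnz cg by blast
qed


lemma rooted_imp_connected:
  assumes "\<forall>v\<in>{1..n}. (adj T)\<^sup>*\<^sup>* v n"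
  shows "connected_on n T"
  unfolding connected_on_def
proof (intro ballI)
  fix u v assume "u \<in> {1..n}" "v \<in> {1..n}"
  then have "(adj T)\<^sup>*\<^sup>* u n" "(adj T)\<^sup>*\<^sup>* n v" using assms rtranclp_adj_sym by blast+
  then show "(adj T)\<^sup>*\<^sup>* u v" by (rule rtranclp_trans)
qed

lemma connected_imp_rooted:
  assumes "connected_on n T" "n \<ge> 1"
  shows "\<forall>v\<in>{1..n}. (adj T)\<^sup>*\<^sup>* v n"
  using assms unfolding connected_on_def by auto

lemma conn_acyclic_card:
  assumes sg: "simple_graph n q e" and S: "S \<subseteq> {1..q}" and cS: "card S = n - 1"
    and conn: "\<forall>v\<in>{1..n}. (adj (e`S))\<^sup>*\<^sup>* v n"
  shows "\<not> has_cycle (e ` S)"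
proof
  assume "has_cycle (e ` S)"
  then obtain ws where ws: "length ws \<ge> 3" "distinct ws"
    "\<forall>i<length ws. {ws ! i, ws ! ((i + 1) mod length ws)} \<in> e ` S"
    unfolding has_cycle_def by blast
  define L where "L = length ws"
  define T where "T = e ` S"
  define \<epsilon> where "\<epsilon> = {ws ! 0, ws ! 1}"
  define T' where "T' = T - {\<epsilon>}"
  have L3: "L \<ge> 3" using ws(1) L_def by simp
  have wE: "{ws ! i, ws ! ((i + 1) mod L)} \<in> T" if "i < L" for i
    using ws(3) that unfolding L_def T_def by blast
  have dn: "ws ! a = ws ! b \<longleftrightarrow> a = b" if "a < L" "b < L" for a b
    using nth_eq_iff_index_eq[OF ws(2)] that L_def by simp
  have "(0 + 1) mod L = 1" using L3 by simp
  then have epsT: "\<epsilon> \<in> T" using wE[of 0] L3 unfolding \<epsilon>_def by simp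
  have step: "adj T' (ws ! k) (ws ! (k + 1))" if "k \<ge> 1" "k + 1 < L" for k
  proof -
    have "(k + 1) mod L = k + 1" using that by simp
    then have e1: "{ws ! k, ws ! (k + 1)} \<in> T" using wE[of k] that by simp
    have ne: "ws ! k \<noteq> ws ! (k + 1)" using dn[of k "k+1"] that by simp
    have "{ws ! k, ws ! (k + 1)} \<noteq> \<epsilon>"
    proof
      assume "{ws ! k, ws ! (k + 1)} = \<epsilon>"
      then have "ws ! (k + 1) = ws ! 0 \<or> ws ! (k + 1) = ws ! 1" unfolding \<epsilon>_def by blast
      then show False using dn[of "k+1" 0] dn[of "k+1" 1] that L3 by auto
    qed
    then show ?thesis using e1 ne unfolding adj_def T'_def by simp
  qed
  have path: "k \<ge> 1 \<Longrightarrow> k < L \<Longrightarrow> (adj T')\<^sup>*\<^sup>* (ws ! 1) (ws ! k)" for k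
  proof (induction k)
    case 0 then show ?case by simp
  next
    case (Suc k)
    show ?case
    proof (cases "k = 0")
      case True then show ?thesis by simp
    next
      case False
      then have "(adj T')\<^sup>*\<^sup>* (ws ! 1) (ws ! k)" using Suc by simp
      moreover have "adj T' (ws ! k) (ws ! (k + 1))" using step[of k] False Suc by simp
      ultimately show ?thesis by simp
    qed
  qed
  have last: "adj T' (ws ! (L - 1)) (ws ! 0)"
  proof -
    have "L - 1 + 1 = L" using L3 by simp
    then have "(L - 1 + 1) mod L = 0" by simp
    then have e1: "{ws ! (L - 1), ws ! 0} \<in> T" using wE[of "L - 1"] L3 by simp
    have ne: "ws ! (L - 1) \<noteq> ws ! 0" using dn[of "L - 1" 0] L3 by simp
    have "{ws ! (L - 1), ws ! 0} \<noteq> \<epsilon>"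
    proof
      assume "{ws ! (L - 1), ws ! 0} = \<epsilon>"
      then have "ws ! (L - 1) = ws ! 0 \<or> ws ! (L - 1) = ws ! 1" unfolding \<epsilon>_def by blast
      then show False using dn[of "L - 1" 0] dn[of "L - 1" 1] L3 by auto
    qed
    then show ?thesis using e1 ne unfolding adj_def T'_def by simp
  qed
  have c10: "(adj T')\<^sup>*\<^sup>* (ws ! 1) (ws ! 0)"
  proof -
    have "(adj T')\<^sup>*\<^sup>* (ws ! 1) (ws ! (L - 1))" using path[of "L - 1"] L3 by simp
    then show ?thesis using last by (rule rtranclp.rtrancl_into_rtrancl)
  qed
  have edge_ok: "(adj T')\<^sup>*\<^sup>* x y" if "adj T x y" for x y
  proof (cases "{x, y} = \<epsilon>")
    case True
    then have "(x = ws ! 0 \<and> y = ws ! 1) \<or> (x = ws ! 1 \<and> y = ws ! 0)"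
      unfolding \<epsilon>_def by (simp add: doubleton_eq_iff)
    then show ?thesis using c10 rtranclp_adj_sym by blast
  next
    case False
    then have "adj T' x y" using that unfolding adj_def T'_def by simp
    then show ?thesis by simp
  qed
  define S' where "S' = {j\<in>S. e j \<noteq> \<epsilon>}"
  have eS': "e ` S' = T'" unfolding S'_def T'_def T_def by auto
  have conn': "\<forall>v\<in>{1..n}. (adj (e ` S'))\<^sup>*\<^sup>* v n"
    using conn rtranclp_adj_mono[OF edge_ok] eS' T_def by auto
  obtain f where f: "nonzero_monomial n q e f" "f ` {1..n-1} \<subseteq> S'"
    using mono_from_conn[OF sg _ conn'] S S'_def by blast
  have finS: "finite S" using S finite_subset by blast
  have "S' \<subset> S"
  proof -
    obtain j where "j \<in> S" "e j = \<epsilon>" using epsT T_def by blast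
    then show ?thesis unfolding S'_def by blast
  qed
  then have "card S' < card S" using finS psubset_card_mono by blast
  moreover have "card (f ` {1..n-1}) = n - 1"
    using card_image[OF nzm_facts(2)[OF f(1)]] by simp
  moreover have "card (f ` {1..n-1}) \<le> card S'"
    using f(2) finS S'_def card_mono by (metis (no_types, lifting) finite_subset mem_Collect_eq subsetI)
  ultimately show False using cS by simp
qed


lemma tree_card_le:
  assumes n1: "n \<ge> 1" and sg: "simple_graph n q e" and Tsub: "T \<subseteq> e ` {1..q}"
    and conn: "connected_on n T" and acyc: "\<not> has_cycle T"
  shows "card {j\<in>{1..q}. e j \<in> T} \<le> n - 1"
proof (rule ccontr)
  define S where "S = {j\<in>{1..q}. e j \<in> T}"
  assume "\<not> card {j\<in>{1..q}. e j \<in> T} \<le> n - 1"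
  then have big: "card S > n - 1" unfolding S_def by simp
  have eS: "e ` S = T" using Tsub unfolding S_def by auto
  have Ssub: "S \<subseteq> {1..q}" unfolding S_def by auto
  have rooted: "\<forall>v\<in>{1..n}. (adj (e ` S))\<^sup>*\<^sup>* v n" using connected_imp_rooted[OF conn n1] eS by simp
  obtain f where f: "nonzero_monomial n q e f" "f ` {1..n-1} \<subseteq> S"
    using mono_from_conn[OF sg Ssub rooted] by blast
  note F = nzm_facts[OF f(1)]
  have cf: "card (f ` {1..n-1}) = n - 1" using card_image[OF F(2)] by simp
  obtain j where j: "j \<in> S" "j \<notin> f ` {1..n-1}"
  proof (rule ccontr)
    assume "\<not> thesis"
    then have "S \<subseteq> f ` {1..n-1}" using that by blast
    then have "card S \<le> n - 1" using cf card_mono by (metis finite_imageI finite_atLeastAtMost)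
    then show False using big by simp
  qed
  define \<epsilon> where "\<epsilon> = e j"
  have jq: "j \<in> {1..q}" using j S_def by simp
  have epsT: "\<epsilon> \<in> T" using j S_def \<epsilon>_def by simp
  obtain a b where ab: "a \<noteq> b" "\<epsilon> = {a, b}"
    using sg_card[OF sg jq] unfolding \<epsilon>_def card_2_iff by blast
  have abV: "a \<in> {1..n}" "b \<in> {1..n}" using sg_sub[OF sg jq] ab \<epsilon>_def by auto
  define T0 where "T0 = e ` content n f"
  have T0T: "T0 \<subseteq> T" using f(2) eS unfolding T0_def content_def by auto
  have T0r: "\<forall>v\<in>{1..n}. (adj T0)\<^sup>*\<^sup>* v n"
  proof
    fix v assume v: "v \<in> {1..n}"
    show "(adj T0)\<^sup>*\<^sup>* v n"
    proof (rule ccontr)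
      assume nr: "\<not> (adj T0)\<^sup>*\<^sup>* v n"
      then have "v \<noteq> n" by auto
      then have v1: "v \<in> {1..n-1}" using v by auto
      obtain \<psi> ws where ws: "length ws \<ge> 3" "distinct ws" "set ws \<subseteq> {1..n-1}"
        "\<forall>i<length ws. \<psi> (ws ! i) = ws ! ((i+1) mod length ws)"
        "\<forall>x\<in>set ws. e (f x) = {x, \<psi> x}"
        using walk_cycle[OF sg f(1) v1] nr T0_def by blast
      have "\<forall>x\<in>set ws. {x, \<psi> x} \<in> T0"
        using ws(3,5) unfolding T0_def content_def by (metis image_eqI subsetD)
      then have "has_cycle T0" using has_cycle_of_ws[OF ws(1,2,4)] by blast
      then show False using has_cycle_mono[OF T0T] acyc by blast
    qed
  qed
  define T' where "T' = T - {\<epsilon>}"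
  have T0T': "T0 \<subseteq> T'"
  proof
    fix x assume "x \<in> T0"
    then obtain v where v: "v \<in> {1..n-1}" "x = e (f v)" unfolding T0_def content_def by blast
    have "e (f v) \<noteq> e j"
    proof
      assume "e (f v) = e j"
      then have "f v = j" using sg_inj[OF sg] F(1)[OF v(1)] jq by (meson inj_onD)
      then show False using j v by blast
    qed
    then show "x \<in> T'" using v T0T \<open>x \<in> T0\<close> unfolding T'_def \<epsilon>_def by auto
  qed
  have T'r: "\<forall>v\<in>{1..n}. (adj T')\<^sup>*\<^sup>* v n"
  proof -
    have "adj T' x y" if "adj T0 x y" for x y
      using T0T' that unfolding adj_def by blast
    then have "\<And>x y. adj T0 x y \<Longrightarrow> (adj T')\<^sup>*\<^sup>* x y" by blast
    then show ?thesis using T0r rtranclp_adj_mono by blast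
  qed
  have T'a: "\<forall>v\<in>{1..n}. (adj T')\<^sup>*\<^sup>* v a"
  proof
    fix v assume "v \<in> {1..n}"
    then have "(adj T')\<^sup>*\<^sup>* v n" "(adj T')\<^sup>*\<^sup>* n a" using T'r abV rtranclp_adj_sym by blast+
    then show "(adj T')\<^sup>*\<^sup>* v a" by (rule rtranclp_trans)
  qed
  obtain \<phi> and d :: "nat \<Rightarrow> nat" where pd: "\<forall>v\<in>{1..n}-{a}. adj T' v (\<phi> v) \<and> d (\<phi> v) < d v"
    using rank_exists[OF T'a] by blast
  have phi: "{v, \<phi> v} \<in> T \<and> {v, \<phi> v} \<noteq> \<epsilon> \<and> \<phi> v \<noteq> v \<and> \<phi> v \<in> {1..n} \<and> d (\<phi> v) < d v"
    if "v \<in> {1..n}" "v \<noteq> a" for v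
  proof -
    have 1: "adj T' v (\<phi> v)" "d (\<phi> v) < d v" using pd that by auto
    then have 2: "{v, \<phi> v} \<in> T" "{v, \<phi> v} \<noteq> \<epsilon>" "\<phi> v \<noteq> v" unfolding adj_def T'_def by auto
    obtain k where "k \<in> {1..q}" "e k = {v, \<phi> v}" using 2(1) Tsub by blast
    then have "\<phi> v \<in> {1..n}" using sg_sub[OF sg] by blast
    then show ?thesis using 1 2 by blast
  qed
  define \<psi> where "\<psi> v = (if v = a then b else \<phi> v)" for v
  have "\<exists>ws. length ws \<ge> 3 \<and> distinct ws \<and> set ws \<subseteq> {1..n} \<and>
           (\<forall>i<length ws. \<psi> (ws ! i) = ws ! ((i+1) mod length ws))"
  proof (rule cycle_of_map)
    show "finite {1..n}" by simp
    show "b \<in> {1..n}" using abV by simp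
    show "\<psi> ` {1..n} \<subseteq> {1..n}"
    proof
      fix y assume "y \<in> \<psi> ` {1..n}"
      then obtain x where x: "x \<in> {1..n}" "y = \<psi> x" by blast
      show "y \<in> {1..n}"
      proof (cases "x = a")
        case True then show ?thesis using x abV unfolding \<psi>_def by simp
      next
        case False then show ?thesis using x phi[OF x(1) False] unfolding \<psi>_def by simp
      qed
    qed
    show "\<forall>x\<in>{1..n}. \<psi> x \<noteq> x"
    proof
      fix x assume x: "x \<in> {1..n}"
      show "\<psi> x \<noteq> x"
      proof (cases "x = a")
        case True then show ?thesis using ab unfolding \<psi>_def by simp
      next
        case False then show ?thesis using phi[OF x False] unfolding \<psi>_def by simp
      qed
    qed
    show "\<forall>x\<in>{1..n}. \<psi> (\<psi> x) \<noteq> x"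
    proof (intro ballI notI)
      fix x assume x: "x \<in> {1..n}" and eq: "\<psi> (\<psi> x) = x"
      show False
      proof (cases "x = a")
        case True
        then have "\<phi> b = a" using eq ab unfolding \<psi>_def by simp
        then have "{b, \<phi> b} = \<epsilon>" using ab by auto
        then show False using phi[of b] abV ab by simp
      next
        case False
        then have px: "\<psi> x = \<phi> x" unfolding \<psi>_def by simp
        show False
        proof (cases "\<phi> x = a")
          case True
          then have "x = b" using eq px unfolding \<psi>_def by simp
          then have "{x, \<phi> x} = \<epsilon>" using True ab by auto
          then show False using phi[OF x False] by simp
        next
          case False2: False
          have y: "\<phi> x \<in> {1..n}" using phi[OF x False] by simp
          have "\<phi> (\<phi> x) = x" using eq px False2 unfolding \<psi>_def by simp
          then show False using phi[OF x False] phi[OF y False2] by simp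
        qed
      qed
    qed
  qed
  then obtain ws where ws: "length ws \<ge> 3" "distinct ws" "set ws \<subseteq> {1..n}"
    "\<forall>i<length ws. \<psi> (ws ! i) = ws ! ((i+1) mod length ws)" by blast
  have "\<forall>x\<in>set ws. {x, \<psi> x} \<in> T"
  proof
    fix x assume "x \<in> set ws"
    then have x: "x \<in> {1..n}" using ws(3) by blast
    show "{x, \<psi> x} \<in> T"
    proof (cases "x = a")
      case True then show ?thesis using epsT ab unfolding \<psi>_def by simp
    next
      case False then show ?thesis using phi[OF x False] unfolding \<psi>_def by simp
    qed
  qed
  then have "has_cycle T" using has_cycle_of_ws[OF ws(1,2,4)] by blast
  then show False using acyc by blast
qed

lemma part1:
  assumes n1: "n \<ge> 1" and sg: "simple_graph n q e" and S: "S \<subseteq> {1..q}" and cS: "card S = n - 1"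
  shows "spanning_tree n q e (e ` S) \<longleftrightarrow> (\<exists>!f. nonzero_monomial n q e f \<and> content n f = S)"
proof
  assume st: "spanning_tree n q e (e ` S)"
  then have conn: "connected_on n (e ` S)" and acyc: "\<not> has_cycle (e ` S)"
    unfolding spanning_tree_def by auto
  obtain f where f: "nonzero_monomial n q e f" "f ` {1..n-1} \<subseteq> S"
    using mono_from_conn[OF sg S connected_imp_rooted[OF conn n1]] by blast
  have finS: "finite S" using S finite_subset by blast
  have "card (f ` {1..n-1}) = n - 1" using card_image[OF nzm_facts(2)[OF f(1)]] by simp
  then have cf: "content n f = S" unfolding content_def using f(2) cS finS card_subset_eq by metis
  show "\<exists>!f. nonzero_monomial n q e f \<and> content n f = S"
  proof (rule ex1I[of _ f])
    show "nonzero_monomial n q e f \<and> content n f = S" using f cf by simp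
  next
    fix g assume g: "nonzero_monomial n q e g \<and> content n g = S"
    show "g = f"
    proof (rule ccontr)
      assume "g \<noteq> f"
      then have "has_cycle (e ` content n f)"
        using mono_unique[OF sg f(1)] g cf by metis
      then show False using acyc cf by simp
    qed
  qed
next
  assume "\<exists>!f. nonzero_monomial n q e f \<and> content n f = S"
  then obtain f where f: "nonzero_monomial n q e f" "content n f = S"
    and uniq: "\<And>g. nonzero_monomial n q e g \<and> content n g = S \<Longrightarrow> g = f" by blast
  have rooted: "\<forall>v\<in>{1..n}. (adj (e ` S))\<^sup>*\<^sup>* v n"
  proof
    fix v assume v: "v \<in> {1..n}"
    show "(adj (e ` S))\<^sup>*\<^sup>* v n"
    proof (rule ccontr)
      assume nr: "\<not> (adj (e ` S))\<^sup>*\<^sup>* v n"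
      then have "v \<noteq> n" by auto
      then have v1: "v \<in> {1..n-1}" using v by auto
      obtain \<psi> ws where ws: "length ws \<ge> 3" "distinct ws" "set ws \<subseteq> {1..n-1}"
        "\<forall>i<length ws. \<psi> (ws ! i) = ws ! ((i+1) mod length ws)"
        "\<forall>x\<in>set ws. e (f x) = {x, \<psi> x}"
        using walk_cycle[OF sg f(1) v1] nr f(2) by blast
      obtain g where "nonzero_monomial n q e g" "content n g = content n f" "g \<noteq> f"
        using flip_mono[OF sg f(1) ws(1,3,4,5)] by blast
      then show False using uniq f(2) by metis
    qed
  qed
  show "spanning_tree n q e (e ` S)"
    unfolding spanning_tree_def
    using rooted_imp_connected[OF rooted] conn_acyclic_card[OF sg S cS rooted] S by blast
qed

theorem theorem2p2:
  fixes n q :: nat and e :: "nat \<Rightarrow> nat set"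
  assumes "n \<ge> 1"
    and "simple_graph n q e"
    and "connected_on n (e ` {1..q})"
  shows "(\<forall>S. S \<subseteq> {1..q} \<and> card S = n - 1 \<longrightarrow>
            (spanning_tree n q e (e ` S) \<longleftrightarrow>
             (\<exists>!f. nonzero_monomial n q e f \<and> content n f = S)))
       \<and> bij_betw (\<lambda>S. e ` S) {content n f | f. uniquely_occurring n q e f}
                 {T. spanning_tree n q e T}"
proof
  note n1 = assms(1) and sg = assms(2)
  show P1: "\<forall>S. S \<subseteq> {1..q} \<and> card S = n - 1 \<longrightarrow>
            (spanning_tree n q e (e ` S) \<longleftrightarrow>
             (\<exists>!f. nonzero_monomial n q e f \<and> content n f = S))"
    using part1[OF n1 sg] by blast
  have csub: "content n f \<subseteq> {1..q}" if "nonzero_monomial n q e f" for f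
    using nzm_facts(1)[OF that] unfolding content_def by auto
  have ccard: "card (content n f) = n - 1" if "nonzero_monomial n q e f" for f
    using card_image[OF nzm_facts(2)[OF that]] unfolding content_def by simp
  show "bij_betw (\<lambda>S. e ` S) {content n f | f. uniquely_occurring n q e f}
                 {T. spanning_tree n q e T}"
    unfolding bij_betw_def
  proof (intro conjI)
    show "inj_on (\<lambda>S. e ` S) {content n f | f. uniquely_occurring n q e f}"
    proof
      fix A B assume A: "A \<in> {content n f | f. uniquely_occurring n q e f}"
        and B: "B \<in> {content n f | f. uniquely_occurring n q e f}" and eq: "e ` A = e ` B"
      from A obtain fA where "uniquely_occurring n q e fA" "A = content n fA" by blast
      then have A1: "A \<subseteq> {1..q}" using csub unfolding uniquely_occurring_def by blast
      from B obtain fB where "uniquely_occurring n q e fB" "B = content n fB" by blast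
      then have "B \<subseteq> {1..q}" using csub unfolding uniquely_occurring_def by blast
      note A1 this
      then show "A = B" using eq inj_on_image_eq_iff[OF sg_inj[OF sg]] by blast
    qed
    show "(\<lambda>S. e ` S) ` {content n f | f. uniquely_occurring n q e f} = {T. spanning_tree n q e T}"
    proof
      show "(\<lambda>S. e ` S) ` {content n f | f. uniquely_occurring n q e f} \<subseteq> {T. spanning_tree n q e T}"
      proof
        fix T assume "T \<in> (\<lambda>S. e ` S) ` {content n f | f. uniquely_occurring n q e f}"
        then obtain f where f: "uniquely_occurring n q e f" "T = e ` content n f" by blast
        have nz: "nonzero_monomial n q e f" using f(1) uniquely_occurring_def by blast
        have "\<exists>!g. nonzero_monomial n q e g \<and> content n g = content n f"
          using f(1) unfolding uniquely_occurring_def by blast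
        then have "spanning_tree n q e (e ` content n f)"
          using part1[OF n1 sg csub[OF nz] ccard[OF nz]] by blast
        then show "T \<in> {T. spanning_tree n q e T}" using f(2) by simp
      qed
    next
      show "{T. spanning_tree n q e T} \<subseteq> (\<lambda>S. e ` S) ` {content n f | f. uniquely_occurring n q e f}"
      proof
        fix T assume "T \<in> {T. spanning_tree n q e T}"
        then have st: "spanning_tree n q e T" by simp
        then have Tsub: "T \<subseteq> e ` {1..q}" and conn: "connected_on n T" and acyc: "\<not> has_cycle T"
          unfolding spanning_tree_def by auto
        define S where "S = {j\<in>{1..q}. e j \<in> T}"
        have eS: "e ` S = T" using Tsub unfolding S_def by auto
        have Ssub: "S \<subseteq> {1..q}" unfolding S_def by auto
        have finS: "finite S" using Ssub finite_subset by blast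
        obtain f where f: "nonzero_monomial n q e f" "f ` {1..n-1} \<subseteq> S"
          using mono_from_conn[OF sg Ssub] connected_imp_rooted[OF conn n1] eS by blast
        have "card (f ` {1..n-1}) = n - 1" using card_image[OF nzm_facts(2)[OF f(1)]] by simp
        then have "n - 1 \<le> card S" using card_mono[OF finS f(2)] by simp
        moreover have "card S \<le> n - 1" using tree_card_le[OF n1 sg Tsub conn acyc] S_def by simp
        ultimately have cS: "card S = n - 1" by simp
        have "\<exists>!g. nonzero_monomial n q e g \<and> content n g = S"
          using part1[OF n1 sg Ssub cS] st eS by simp
        then obtain g where g: "nonzero_monomial n q e g" "content n g = S"
          and u: "\<And>h. nonzero_monomial n q e h \<and> content n h = S \<Longrightarrow> h = g" by blast
        have "uniquely_occurring n q e g" unfolding uniquely_occurring_def using g u by metis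
        then have "S \<in> {content n f | f. uniquely_occurring n q e f}" using g(2) by blast
        then show "T \<in> (\<lambda>S. e ` S) ` {content n f | f. uniquely_occurring n q e f}" using eS by blast
      qed
    qed
  qed
qed

end
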